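(* Let $F$ be a Banach lattice and $(f_n)\subset\mathrm{S}_F$ a quasi-disjoint sequence. Then $\overline{\mathrm{span}}\{f_n\}_{n\in\mathbb{N}}$ is anti-dispersed.
   Context: $\mathrm{S}_X$ is the unit sphere. Elements $x,y$ are disjoint if $|x|\wedge|y|=0$. $(f_n)\subset\mathrm{S}_F$ is quasi-disjoint if there is a disjoint sequence $(e_n)\subset\mathrm{S}_F$ with $\sum_n\|f_n-e_n\|<1$. A subspace $E$ is dispersed if it contains no almost disjoint sequence, i.e. no $(e_n)\subset\mathrm{S}_E$ for which there is a disjoint $(g_n)\subset F$ with $\|g_n-e_n\|\to0$. A closed subspace is anti-dispersed if it contains no infinite-dimensional closed dispersed subspace. *)

theory Defs
  imports "HOL-Analysis.Analysis"
begin

definition lat_abs :: "'a::{lattice, uminus} \<Rightarrow> 'a" where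
  "lat_abs x = sup x (- x)"

class banach_lattice = banach + ordered_real_vector + lattice +
  assumes lattice_norm: "sup x (- x) \<le> sup y (- y) \<Longrightarrow> norm x \<le> norm y"

definition lat_disjoint :: "'a::banach_lattice \<Rightarrow> 'a \<Rightarrow> bool" where
  "lat_disjoint x y \<longleftrightarrow> inf (lat_abs x) (lat_abs y) = 0"

definition unit_sphere :: "'a::real_normed_vector set" where
  "unit_sphere = {x. norm x = 1}"

definition disjoint_seq :: "(nat \<Rightarrow> 'a::banach_lattice) \<Rightarrow> bool" where
  "disjoint_seq g \<longleftrightarrow> (\<forall>i j. i \<noteq> j \<longrightarrow> lat_disjoint (g i) (g j))"

definition quasi_disjoint :: "(nat \<Rightarrow> 'a::banach_lattice) \<Rightarrow> bool" where
  "quasi_disjoint f \<longleftrightarrow> range f \<subseteq> unit_sphere \<and>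
     (\<exists>e. range e \<subseteq> unit_sphere \<and> disjoint_seq e \<and>
          summable (\<lambda>n. norm (f n - e n)) \<and> (\<Sum>n. norm (f n - e n)) < 1)"

definition almost_disjoint_in :: "'a::banach_lattice set \<Rightarrow> (nat \<Rightarrow> 'a) \<Rightarrow> bool" where
  "almost_disjoint_in E e \<longleftrightarrow> range e \<subseteq> unit_sphere \<inter> E \<and>
     (\<exists>g. disjoint_seq g \<and> (\<lambda>n. norm (g n - e n)) \<longlonglongrightarrow> 0)"

definition dispersed :: "'a::banach_lattice set \<Rightarrow> bool" where
  "dispersed E \<longleftrightarrow> \<not> (\<exists>e. almost_disjoint_in E e)"

definition infinite_dimensional :: "'a::real_vector set \<Rightarrow> bool" where
  "infinite_dimensional X \<longleftrightarrow> \<not> (\<exists>B. finite B \<and> span B = X)"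

definition anti_dispersed :: "'a::banach_lattice set \<Rightarrow> bool" where
  "anti_dispersed E \<longleftrightarrow> subspace E \<and> closed E \<and>
     \<not> (\<exists>X. X \<subseteq> E \<and> subspace X \<and> closed X \<and> infinite_dimensional X \<and> dispersed X)"

end

theory Submission
  imports Defs
begin


lemma abs_ge_self: "(x::'a::banach_lattice) \<le> lat_abs x"
  by (simp add: lat_abs_def)
lemma abs_ge_neg: "- (x::'a::banach_lattice) \<le> lat_abs x"
  by (simp add: lat_abs_def)

lemma abs_nonneg: "0 \<le> lat_abs (x::'a::banach_lattice)"
proof -
  have "x + (- x) \<le> lat_abs x + lat_abs x"
    using add_mono[OF abs_ge_self abs_ge_neg] .
  hence "0 \<le> (2::real) *\<^sub>R lat_abs x" by (simp add: scaleR_2)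
  hence "(1/2::real) *\<^sub>R 0 \<le> (1/2::real) *\<^sub>R ((2::real) *\<^sub>R lat_abs x)"
    by (intro scaleR_left_mono) auto
  thus ?thesis by simp
qed

lemma abs_le_iff: "lat_abs (x::'a::banach_lattice) \<le> y \<longleftrightarrow> x \<le> y \<and> - x \<le> y"
  by (simp add: lat_abs_def)

lemma abs_neg: "lat_abs (- (x::'a::banach_lattice)) = lat_abs x"
  by (simp add: lat_abs_def sup_commute)

lemma abs_triangle: "lat_abs ((x::'a::banach_lattice) + y) \<le> lat_abs x + lat_abs y"
  unfolding abs_le_iff
  using add_mono[OF abs_ge_self abs_ge_self, of x y] add_mono[OF abs_ge_neg abs_ge_neg, of x y]
  by (simp add: add.commute)

lemma abs_scale_le: "lat_abs (c *\<^sub>R (x::'a::banach_lattice)) \<le> \<bar>c\<bar> *\<^sub>R lat_abs x"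
proof (cases "c \<ge> 0")
  case True
  have "c *\<^sub>R x \<le> c *\<^sub>R lat_abs x" by (rule scaleR_left_mono[OF abs_ge_self True])
  moreover have "c *\<^sub>R (-x) \<le> c *\<^sub>R lat_abs x" by (rule scaleR_left_mono[OF abs_ge_neg True])
  ultimately show ?thesis using True by (simp add: abs_le_iff)
next
  case False
  hence c: "-c \<ge> 0" by simp
  have "(-c) *\<^sub>R (-x) \<le> (-c) *\<^sub>R lat_abs x" by (rule scaleR_left_mono[OF abs_ge_neg c])
  moreover have "(-c) *\<^sub>R x \<le> (-c) *\<^sub>R lat_abs x" by (rule scaleR_left_mono[OF abs_ge_self c])
  ultimately show ?thesis using False by (simp add: abs_le_iff)
qed

lemma inf_add_le:
  fixes a b c :: "'a::banach_lattice"
  assumes "0 \<le> a" "0 \<le> b" "0 \<le> c"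
  shows "inf a (b + c) \<le> inf a b + inf a c"
proof -
  let ?m = "inf a (b + c)"
  have "0 \<le> inf a b" using assms by simp
  have m1: "?m \<le> a" and m2: "?m \<le> b + c" by auto
  have "?m - inf a b \<le> a" using m1 \<open>0 \<le> inf a b\<close>
    by (metis add_increasing2 diff_le_eq)
  moreover have "?m - c \<le> a" using m1 assms(3) by (metis add_increasing2 diff_le_eq)
  moreover have "?m - c \<le> b" using m2 by (simp add: diff_le_eq)
  ultimately have "?m - inf a b \<le> c"
    by (metis diff_le_eq le_inf_iff add.commute)
  hence "?m - inf a b \<le> inf a c" using \<open>?m - inf a b \<le> a\<close> by simp
  thus ?thesis by (metis diff_le_eq add.commute)
qed




lemma inf_nat_scale_zero:
  fixes a b :: "'a::banach_lattice"
  assumes "0 \<le> a" "0 \<le> b" "inf a b = 0"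
  shows "inf a (real n *\<^sub>R b) = 0"
proof (induction n)
  case 0 then show ?case using assms by (simp add: inf_absorb2)
next
  case (Suc n)
  have nb: "0 \<le> real n *\<^sub>R b" using assms by (simp add: scaleR_nonneg_nonneg)
  have "inf a (real (Suc n) *\<^sub>R b) = inf a (real n *\<^sub>R b + b)"
    by (simp add: scaleR_add_left add.commute)
  also have "\<dots> \<le> inf a (real n *\<^sub>R b) + inf a b"
    by (rule inf_add_le[OF assms(1) nb assms(2)])
  also have "\<dots> = 0" using Suc assms by simp
  finally have "inf a (real (Suc n) *\<^sub>R b) \<le> 0" .
  moreover have "0 \<le> inf a (real (Suc n) *\<^sub>R b)" using assms
    by (simp add: scaleR_nonneg_nonneg del: of_nat_Suc)
  ultimately show ?case by (rule antisym)
qed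

lemma inf_scale_zero:
  fixes a b :: "'a::banach_lattice"
  assumes "0 \<le> a" "0 \<le> b" "inf a b = 0" "0 \<le> k"
  shows "inf a (k *\<^sub>R b) = 0"
proof -
  obtain n :: nat where n: "k \<le> real n" using real_arch_simple by blast
  have "k *\<^sub>R b \<le> real n *\<^sub>R b" by (rule scaleR_right_mono[OF n assms(2)])
  hence "inf a (k *\<^sub>R b) \<le> inf a (real n *\<^sub>R b)" by (simp add: inf.coboundedI2)
  hence "inf a (k *\<^sub>R b) \<le> 0" using inf_nat_scale_zero[OF assms(1-3)] by simp
  moreover have "0 \<le> inf a (k *\<^sub>R b)" using assms by (simp add: scaleR_nonneg_nonneg)
  ultimately show ?thesis by (rule antisym)
qed

lemma inf_sum_zero:
  fixes a :: "'a::banach_lattice"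
  assumes "0 \<le> a" "finite J" "\<And>i. i \<in> J \<Longrightarrow> 0 \<le> w i \<and> inf a (w i) = 0"
  shows "inf a (sum w J) = 0"
  using assms(2,3)
proof (induction J rule: finite_induct)
  case empty then show ?case using assms(1) by (simp add: inf_absorb2)
next
  case (insert j J)
  have s: "0 \<le> sum w J" using insert by (simp add: sum_nonneg)
  have wj: "0 \<le> w j" using insert.prems by simp
  have "inf a (sum w (insert j J)) = inf a (w j + sum w J)" using insert by simp
  also have "\<dots> \<le> inf a (w j) + inf a (sum w J)"
    by (rule inf_add_le[OF assms(1) wj s])
  also have "\<dots> = 0" using insert by simp
  finally have "inf a (sum w (insert j J)) \<le> 0" .
  moreover have "0 \<le> inf a (sum w (insert j J))" using insert assms(1)
    by (simp add: sum_nonneg)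
  ultimately show ?case by (rule antisym)
qed

lemma abs_sum_le:
  fixes x :: "'b \<Rightarrow> 'a::banach_lattice"
  shows "lat_abs (\<Sum>i\<in>J. c i *\<^sub>R x i) \<le> (\<Sum>i\<in>J. \<bar>c i\<bar> *\<^sub>R lat_abs (x i))"
proof (induction J rule: infinite_finite_induct)
  case (infinite A) then show ?case by (simp add: lat_abs_def)
next
  case empty then show ?case by (simp add: lat_abs_def)
next
  case (insert j J)
  have "lat_abs (\<Sum>i\<in>insert j J. c i *\<^sub>R x i) = lat_abs (c j *\<^sub>R x j + (\<Sum>i\<in>J. c i *\<^sub>R x i))"
    using insert by simp
  also have "\<dots> \<le> lat_abs (c j *\<^sub>R x j) + lat_abs (\<Sum>i\<in>J. c i *\<^sub>R x i)" by (rule abs_triangle)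
  also have "\<dots> \<le> \<bar>c j\<bar> *\<^sub>R lat_abs (x j) + (\<Sum>i\<in>J. \<bar>c i\<bar> *\<^sub>R lat_abs (x i))"
    by (rule add_mono[OF abs_scale_le insert.IH])
  finally show ?case using insert by simp
qed

lemma disj_sum:
  fixes x :: "'b \<Rightarrow> 'a::banach_lattice"
  assumes "0 \<le> a" "finite J" "\<And>i. i \<in> J \<Longrightarrow> inf a (lat_abs (x i)) = 0"
  shows "inf a (lat_abs (\<Sum>i\<in>J. c i *\<^sub>R x i)) = 0"
proof -
  have "inf a (\<Sum>i\<in>J. \<bar>c i\<bar> *\<^sub>R lat_abs (x i)) = 0"
  proof (rule inf_sum_zero[OF assms(1,2)])
    fix i assume i: "i \<in> J"
    show "0 \<le> \<bar>c i\<bar> *\<^sub>R lat_abs (x i) \<and> inf a (\<bar>c i\<bar> *\<^sub>R lat_abs (x i)) = 0"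
      using scaleR_nonneg_nonneg[OF abs_ge_zero abs_nonneg]
        inf_scale_zero[OF assms(1) abs_nonneg assms(3)[OF i] abs_ge_zero] by blast
  qed
  moreover have "inf a (lat_abs (\<Sum>i\<in>J. c i *\<^sub>R x i)) \<le> inf a (\<Sum>i\<in>J. \<bar>c i\<bar> *\<^sub>R lat_abs (x i))"
    using abs_sum_le[of c x J] by (meson inf_mono order_refl)
  moreover have "0 \<le> inf a (lat_abs (\<Sum>i\<in>J. c i *\<^sub>R x i))" using assms(1) abs_nonneg by simp
  ultimately show ?thesis by simp
qed

lemma abs_le_add_disj:
  fixes x y :: "'a::banach_lattice"
  assumes "lat_disjoint x y"
  shows "lat_abs x \<le> lat_abs (x + y)"
proof -
  have d: "inf (lat_abs x) (lat_abs y) = 0" using assms by (simp add: lat_disjoint_def)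
  have key: "inf (lat_abs x) (lat_abs (x + y) + lat_abs y) \<le> lat_abs (x + y)"
  proof -
    have "inf (lat_abs x) (lat_abs (x + y) + lat_abs y)
        \<le> inf (lat_abs x) (lat_abs (x + y)) + inf (lat_abs x) (lat_abs y)"
      by (rule inf_add_le[OF abs_nonneg abs_nonneg abs_nonneg])
    also have "\<dots> = inf (lat_abs x) (lat_abs (x + y))" using d by simp
    also have "\<dots> \<le> lat_abs (x + y)" by simp
    finally show ?thesis .
  qed
  have "x = (x + y) + (- y)" by simp
  hence "x \<le> lat_abs (x + y) + lat_abs y"
    by (metis add_mono abs_ge_self abs_ge_neg)
  hence 1: "x \<le> lat_abs (x + y)" using key abs_ge_self[of x] by (meson le_inf_iff order_trans)
  have "- x = (- (x + y)) + y" by simp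
  hence "- x \<le> lat_abs (x + y) + lat_abs y"
    by (metis add_mono abs_ge_self abs_ge_neg)
  hence 2: "- x \<le> lat_abs (x + y)" using key abs_ge_neg[of x] by (meson le_inf_iff order_trans)
  show ?thesis using 1 2 by (simp add: abs_le_iff)
qed

lemma coeff_le_norm_disj:
  fixes e :: "nat \<Rightarrow> 'a::banach_lattice"
  assumes "disjoint_seq e" "finite J" "k \<in> J"
  shows "\<bar>c k\<bar> * norm (e k) \<le> norm (\<Sum>i\<in>J. c i *\<^sub>R e i)"
proof -
  have dj: "lat_disjoint (c k *\<^sub>R e k) (\<Sum>i\<in>J-{k}. c i *\<^sub>R e i)"
  proof -
    have "inf (lat_abs (\<Sum>i\<in>J-{k}. c i *\<^sub>R e i)) (lat_abs (e k)) = 0"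
    proof -
      have "inf (lat_abs (e k)) (lat_abs (\<Sum>i\<in>J-{k}. c i *\<^sub>R e i)) = 0"
        using assms by (intro disj_sum abs_nonneg)
           (auto simp: disjoint_seq_def lat_disjoint_def)
      thus ?thesis by (simp add: inf_commute)
    qed
    hence "inf (lat_abs (\<Sum>i\<in>J-{k}. c i *\<^sub>R e i)) (lat_abs (\<Sum>i\<in>{k}. c i *\<^sub>R e i)) = 0"
      by (intro disj_sum abs_nonneg) auto
    thus ?thesis by (simp add: lat_disjoint_def inf_commute)
  qed
  have "(\<Sum>i\<in>J. c i *\<^sub>R e i) = c k *\<^sub>R e k + (\<Sum>i\<in>J-{k}. c i *\<^sub>R e i)"
    using assms by (simp add: sum.remove)
  hence "lat_abs (c k *\<^sub>R e k) \<le> lat_abs (\<Sum>i\<in>J. c i *\<^sub>R e i)"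
    using abs_le_add_disj[OF dj] by simp
  hence "norm (c k *\<^sub>R e k) \<le> norm (\<Sum>i\<in>J. c i *\<^sub>R e i)"
    by (intro lattice_norm) (simp add: lat_abs_def)
  thus ?thesis by simp
qed




lemma subspace_closure_rv:
  fixes S :: "'a::real_normed_vector set"
  assumes "subspace S" shows "subspace (closure S)"
  unfolding subspace_def
proof (intro conjI ballI allI)
  show "0 \<in> closure S" using assms closure_subset subspace_0 by blast
next
  fix x y assume x: "x \<in> closure S" and y: "y \<in> closure S"
  obtain a where a: "\<forall>n. a n \<in> S" "a \<longlonglongrightarrow> x" using x closure_sequential[of x S] by blast
  obtain b where b: "\<forall>n. b n \<in> S" "b \<longlonglongrightarrow> y" using y closure_sequential[of y S] by blast
  have "\<forall>n. a n + b n \<in> S" using a b assms subspace_add by blast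
  moreover have "(\<lambda>n. a n + b n) \<longlonglongrightarrow> x + y" using a b by (intro tendsto_add)
  ultimately show "x + y \<in> closure S" unfolding closure_sequential
    by (intro exI[of _ "\<lambda>n. a n + b n"]) simp
next
  fix c and x assume x: "x \<in> closure S"
  obtain a where a: "\<forall>n. a n \<in> S" "a \<longlonglongrightarrow> x" using x closure_sequential[of x S] by blast
  have "\<forall>n. c *\<^sub>R a n \<in> S" using a assms subspace_scale by blast
  moreover have "(\<lambda>n. c *\<^sub>R a n) \<longlonglongrightarrow> c *\<^sub>R x" using a by (intro tendsto_scaleR tendsto_const)
  ultimately show "c *\<^sub>R x \<in> closure S" unfolding closure_sequential
    by (intro exI[of _ "\<lambda>n. c *\<^sub>R a n"]) simp
qed

lemma span_image_repr:
  assumes "t \<in> span (f ` A)" "inj f"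
  shows "\<exists>J a. finite J \<and> J \<subseteq> A \<and> t = (\<Sum>i\<in>J. a i *\<^sub>R f i)"
proof -
  obtain T r where T: "finite T" "T \<subseteq> f ` A" "t = (\<Sum>v\<in>T. r v *\<^sub>R v)"
    using assms(1) unfolding span_explicit by blast
  obtain J where J: "J \<subseteq> A" "finite J" "T = f ` J" using finite_subset_image[OF T(1,2)] by blast
  have "t = (\<Sum>v\<in>f ` J. r v *\<^sub>R v)" using T(3) J(3) by simp
  also have "\<dots> = (\<Sum>i\<in>J. r (f i) *\<^sub>R f i)"
    by (rule sum.reindex_cong[where l=f]) (auto intro: inj_on_subset[OF assms(2)])
  finally have "t = (\<Sum>i\<in>J. r (f i) *\<^sub>R f i)" .
  thus ?thesis using J by (intro exI[of _ J] exI[of _ "\<lambda>i. r (f i)"]) auto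
qed

lemma disj_blocks:
  fixes e :: "nat \<Rightarrow> 'a::banach_lattice"
  assumes "disjoint_seq e" "finite I" "finite J" "I \<inter> J = {}"
  shows "lat_disjoint (\<Sum>i\<in>I. a i *\<^sub>R e i) (\<Sum>j\<in>J. b j *\<^sub>R e j)"
proof -
  have "\<And>i. i \<in> I \<Longrightarrow> inf (lat_abs (\<Sum>j\<in>J. b j *\<^sub>R e j)) (lat_abs (e i)) = 0"
  proof -
    fix i assume i: "i \<in> I"
    have "inf (lat_abs (e i)) (lat_abs (\<Sum>j\<in>J. b j *\<^sub>R e j)) = 0"
    proof (rule disj_sum[OF abs_nonneg assms(3)])
      fix j assume j: "j \<in> J"
      hence "i \<noteq> j" using i assms(4) by blast
      thus "inf (lat_abs (e i)) (lat_abs (e j)) = 0"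
        using assms(1) by (simp add: disjoint_seq_def lat_disjoint_def)
    qed
    thus "inf (lat_abs (\<Sum>j\<in>J. b j *\<^sub>R e j)) (lat_abs (e i)) = 0" by (simp add: inf_commute)
  qed
  hence "inf (lat_abs (\<Sum>j\<in>J. b j *\<^sub>R e j)) (lat_abs (\<Sum>i\<in>I. a i *\<^sub>R e i)) = 0"
    using assms by (intro disj_sum abs_nonneg) auto
  thus ?thesis by (simp add: lat_disjoint_def inf_commute)
qed

locale qd =
  fixes f e :: "nat \<Rightarrow> 'a::banach_lattice"
  assumes fs: "\<And>n. norm (f n) = 1" and es: "\<And>n. norm (e n) = 1"
    and dj: "disjoint_seq e" and sm: "summable (\<lambda>n. norm (f n - e n))"
    and lt: "(\<Sum>n. norm (f n - e n)) < 1"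
begin

definition "d n = norm (f n - e n)"
definition "\<delta> = (\<Sum>n. d n)"

lemma d_nonneg: "0 \<le> d n" by (simp add: d_def)
lemma smd: "summable d" using sm by (simp add: d_def[abs_def])
lemma \<delta>_lt: "\<delta> < 1" using lt by (simp add: \<delta>_def d_def)

lemma sum_d_le: "finite J \<Longrightarrow> sum d J \<le> \<delta>"
  unfolding \<delta>_def by (rule sum_le_suminf[OF smd]) (auto simp: d_nonneg)

lemma tail_le:
  assumes "finite J" "J \<subseteq> {N..}"
  shows "sum d J \<le> \<delta> - (\<Sum>i<N. d i)"
proof -
  have "J \<inter> {..<N} = {}" using assms by auto
  hence "sum d J + (\<Sum>i<N. d i) = sum d (J \<union> {..<N})" using assms by (simp add: sum.union_disjoint)
  also have "\<dots> \<le> \<delta>" using assms by (intro sum_d_le) auto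
  finally show ?thesis by simp
qed

lemma diff_bound:
  assumes "finite J" "\<And>i. i \<in> J \<Longrightarrow> \<bar>c i\<bar> \<le> K"
  shows "norm ((\<Sum>i\<in>J. c i *\<^sub>R f i) - (\<Sum>i\<in>J. c i *\<^sub>R e i)) \<le> K * sum d J"
proof -
  have "(\<Sum>i\<in>J. c i *\<^sub>R f i) - (\<Sum>i\<in>J. c i *\<^sub>R e i) = (\<Sum>i\<in>J. c i *\<^sub>R (f i - e i))"
    by (simp add: sum_subtractf scaleR_diff_right)
  also have "norm \<dots> \<le> (\<Sum>i\<in>J. norm (c i *\<^sub>R (f i - e i)))" by (rule norm_sum)
  also have "\<dots> = (\<Sum>i\<in>J. \<bar>c i\<bar> * d i)" by (simp add: d_def)
  also have "\<dots> \<le> (\<Sum>i\<in>J. K * d i)" using assms by (intro sum_mono mult_right_mono d_nonneg) auto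
  also have "\<dots> = K * sum d J" by (simp add: sum_distrib_left)
  finally show ?thesis .
qed

lemma coeffA:
  assumes "finite J" "k \<in> J"
  shows "\<bar>c k\<bar> * (1 - \<delta>) \<le> norm (\<Sum>i\<in>J. c i *\<^sub>R f i)"
proof -
  define M where "M = Max ((\<lambda>i. \<bar>c i\<bar>) ` J)"
  have ne: "J \<noteq> {}" using assms by auto
  have "M \<in> (\<lambda>i. \<bar>c i\<bar>) ` J" unfolding M_def using assms ne by (intro Max_in) auto
  then obtain k0 where k0: "k0 \<in> J" "\<bar>c k0\<bar> = M" by (metis imageE)
  have ck: "\<bar>c k\<bar> \<le> M" unfolding M_def using assms by simp
  have Mb: "\<And>i. i \<in> J \<Longrightarrow> \<bar>c i\<bar> \<le> M" unfolding M_def using assms by simp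
  have M0: "0 \<le> M" using ck by linarith
  have e1: "M \<le> norm (\<Sum>i\<in>J. c i *\<^sub>R e i)"
    using coeff_le_norm_disj[OF dj assms(1) k0(1), of c] k0 es by simp
  have e2: "norm ((\<Sum>i\<in>J. c i *\<^sub>R f i) - (\<Sum>i\<in>J. c i *\<^sub>R e i)) \<le> M * \<delta>"
    using diff_bound[OF assms(1) Mb] sum_d_le[OF assms(1)] M0
    by (meson mult_left_mono order_trans)
  have "norm (\<Sum>i\<in>J. c i *\<^sub>R e i) - norm ((\<Sum>i\<in>J. c i *\<^sub>R e i) - (\<Sum>i\<in>J. c i *\<^sub>R f i))
        \<le> norm (\<Sum>i\<in>J. c i *\<^sub>R f i)"
    using norm_triangle_ineq2[of "\<Sum>i\<in>J. c i *\<^sub>R e i" "\<Sum>i\<in>J. c i *\<^sub>R f i"]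
    by (simp add: norm_minus_commute)
  hence "M - M * \<delta> \<le> norm (\<Sum>i\<in>J. c i *\<^sub>R f i)" using e1 e2
    by (simp add: norm_minus_commute)
  moreover have "\<bar>c k\<bar> * (1 - \<delta>) \<le> M * (1 - \<delta>)" using ck \<delta>_lt by (intro mult_right_mono) auto
  ultimately show ?thesis by (simp add: algebra_simps)
qed

lemma inj_f: "inj f"
proof (rule injI, rule ccontr)
  fix i j assume eq: "f i = f j" and ne: "i \<noteq> j"
  define c where "c = (\<lambda>k. if k = i then 1 else if k = j then -1 else (0::real))"
  have "(\<Sum>k\<in>{i,j}. c k *\<^sub>R f k) = 0" using eq ne by (simp add: c_def)
  moreover have "\<bar>c i\<bar> * (1 - \<delta>) \<le> norm (\<Sum>k\<in>{i,j}. c k *\<^sub>R f k)" by (rule coeffA) auto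
  ultimately show False using \<delta>_lt by (simp add: c_def)
qed

end



context qd begin

definition "TT N = closure (span (f ` {N..}))"
definition "WW N = {(\<Sum>i<N. c i *\<^sub>R f i) + t | c t. t \<in> TT N}"

lemma TT_subspace: "subspace (TT N)"
  unfolding TT_def by (intro subspace_closure_rv subspace_span)

lemma TT_closed: "closed (TT N)" unfolding TT_def by simp

lemma coeffT:
  assumes "j < N" "t \<in> TT N"
  shows "\<bar>c j\<bar> * (1 - \<delta>) \<le> norm ((\<Sum>i<N. c i *\<^sub>R f i) + t)"
proof -
  let ?V = "(\<Sum>i<N. c i *\<^sub>R f i)"
  have sp: "span (f ` {N..}) \<subseteq> {t. \<bar>c j\<bar> * (1 - \<delta>) \<le> norm (?V + t)}"
  proof
    fix t assume "t \<in> span (f ` {N..})"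
    then obtain J a where J: "finite J" "J \<subseteq> {N..}" "t = (\<Sum>i\<in>J. a i *\<^sub>R f i)"
      using span_image_repr[OF _ inj_f] by blast
    define c' where "c' = (\<lambda>i. if i < N then c i else a i)"
    have disj: "{..<N} \<inter> J = {}" using J by auto
    have "?V + t = (\<Sum>i\<in>{..<N}. c' i *\<^sub>R f i) + (\<Sum>i\<in>J. c' i *\<^sub>R f i)"
      using J by (auto simp: c'_def intro!: sum.cong)
    also have "\<dots> = (\<Sum>i\<in>{..<N} \<union> J. c' i *\<^sub>R f i)"
      using disj J by (simp add: sum.union_disjoint)
    finally have eq: "?V + t = (\<Sum>i\<in>{..<N} \<union> J. c' i *\<^sub>R f i)" .
    have "\<bar>c' j\<bar> * (1 - \<delta>) \<le> norm (\<Sum>i\<in>{..<N} \<union> J. c' i *\<^sub>R f i)"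
      using assms J by (intro coeffA) auto
    thus "t \<in> {t. \<bar>c j\<bar> * (1 - \<delta>) \<le> norm (?V + t)}" using eq assms by (simp add: c'_def)
  qed
  have cl: "closed {t. \<bar>c j\<bar> * (1 - \<delta>) \<le> norm (?V + t)}"
    by (intro closed_Collect_le continuous_intros)
  show ?thesis using closure_minimal[OF sp cl] assms(2) unfolding TT_def by blast
qed

lemma WW_subspace: "subspace (WW N)"
  unfolding subspace_def
proof (intro conjI ballI allI)
  show "0 \<in> WW N" unfolding WW_def using subspace_0[OF TT_subspace]
    by (intro CollectI exI[of _ "\<lambda>_. 0"] exI[of _ 0]) simp
next
  fix x y assume "x \<in> WW N" "y \<in> WW N"
  then obtain c1 t1 c2 t2 where x: "x = (\<Sum>i<N. c1 i *\<^sub>R f i) + t1" "t1 \<in> TT N"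
    and y: "y = (\<Sum>i<N. c2 i *\<^sub>R f i) + t2" "t2 \<in> TT N" unfolding WW_def by blast
  have "x + y = (\<Sum>i<N. (c1 i + c2 i) *\<^sub>R f i) + (t1 + t2)"
    using x y by (simp add: scaleR_add_left sum.distrib algebra_simps)
  moreover have "t1 + t2 \<in> TT N" using x y subspace_add[OF TT_subspace] by blast
  ultimately show "x + y \<in> WW N" unfolding WW_def
    by (intro CollectI exI[of _ "\<lambda>i. c1 i + c2 i"] exI[of _ "t1 + t2"] conjI)
next
  fix r and x assume "x \<in> WW N"
  then obtain c1 t1 where x: "x = (\<Sum>i<N. c1 i *\<^sub>R f i) + t1" "t1 \<in> TT N"
    unfolding WW_def by blast
  have "r *\<^sub>R x = (\<Sum>i<N. (r * c1 i) *\<^sub>R f i) + r *\<^sub>R t1"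
    using x by (simp add: scaleR_add_right scaleR_sum_right)
  moreover have "r *\<^sub>R t1 \<in> TT N" using x subspace_scale[OF TT_subspace] by blast
  ultimately show "r *\<^sub>R x \<in> WW N" unfolding WW_def
    by (intro CollectI exI[of _ "\<lambda>i. r * c1 i"] exI[of _ "r *\<^sub>R t1"] conjI)
qed

lemma WW_closed: "closed (WW N)"
  unfolding closed_sequential_limits
proof (intro allI impI, elim conjE)
  fix s l assume sW: "\<forall>n. s n \<in> WW N" and lim: "s \<longlonglongrightarrow> l"
  have "\<forall>n. \<exists>c t. s n = (\<Sum>i<N. c i *\<^sub>R f i) + t \<and> t \<in> TT N"
    using sW unfolding WW_def by blast
  then obtain C tt where Ct: "\<And>n. s n = (\<Sum>i<N. C n i *\<^sub>R f i) + tt n \<and> tt n \<in> TT N"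
    by metis
  have pos: "0 < 1 - \<delta>" using \<delta>_lt by simp
  have cs: "Cauchy s" using lim by (rule LIMSEQ_imp_Cauchy)
  have cauchy: "Cauchy (\<lambda>n. C n j)" if j: "j < N" for j
    unfolding Cauchy_def
  proof (intro allI impI)
    fix \<epsilon> :: real assume "\<epsilon> > 0"
    hence "\<epsilon> * (1 - \<delta>) > 0" using pos by simp
    then obtain M where M: "\<forall>m\<ge>M. \<forall>n\<ge>M. dist (s m) (s n) < \<epsilon> * (1 - \<delta>)"
      using cs unfolding Cauchy_def by blast
    show "\<exists>M. \<forall>m\<ge>M. \<forall>n\<ge>M. dist (C m j) (C n j) < \<epsilon>"
    proof (intro exI[of _ M] allI impI)
      fix m n assume mn: "m \<ge> M" "n \<ge> M"
      have "s m - s n = (\<Sum>i<N. (C m i - C n i) *\<^sub>R f i) + (tt m - tt n)"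
        using Ct[of m] Ct[of n] by (simp add: scaleR_diff_left sum_subtractf algebra_simps)
      moreover have "tt m - tt n \<in> TT N" using Ct[of m] Ct[of n] subspace_diff[OF TT_subspace] by blast
      ultimately have "\<bar>C m j - C n j\<bar> * (1 - \<delta>) \<le> norm (s m - s n)"
        using coeffT[OF j, of "tt m - tt n" "\<lambda>i. C m i - C n i"] by simp
      also have "\<dots> < \<epsilon> * (1 - \<delta>)" using M mn by (simp add: dist_norm)
      finally show "dist (C m j) (C n j) < \<epsilon>" using pos by (simp add: dist_real_def)
    qed
  qed
  define cl where "cl j = lim (\<lambda>n. C n j)" for j
  have Cl: "(\<lambda>n. C n j) \<longlonglongrightarrow> cl j" if "j < N" for j
    using cauchy[OF that] unfolding cl_def Cauchy_convergent_iff convergent_LIMSEQ_iff .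
  have V: "(\<lambda>n. \<Sum>i<N. C n i *\<^sub>R f i) \<longlonglongrightarrow> (\<Sum>i<N. cl i *\<^sub>R f i)"
    by (intro tendsto_sum tendsto_scaleR Cl tendsto_const) auto
  have "(\<lambda>n. s n - (\<Sum>i<N. C n i *\<^sub>R f i)) \<longlonglongrightarrow> l - (\<Sum>i<N. cl i *\<^sub>R f i)"
    by (intro tendsto_diff lim V)
  moreover have "\<forall>n. s n - (\<Sum>i<N. C n i *\<^sub>R f i) \<in> TT N" using Ct by simp
  moreover have cT: "\<And>x l. (\<forall>n. x n \<in> TT N) \<Longrightarrow> x \<longlonglongrightarrow> l \<Longrightarrow> l \<in> TT N"
    using TT_closed[of N] unfolding closed_sequential_limits by blast
  ultimately have "l - (\<Sum>i<N. cl i *\<^sub>R f i) \<in> TT N" by (metis (no_types, lifting))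
  moreover have "l = (\<Sum>i<N. cl i *\<^sub>R f i) + (l - (\<Sum>i<N. cl i *\<^sub>R f i))" by simp
  ultimately show "l \<in> WW N" unfolding WW_def by blast
qed

lemma range_WW: "range f \<subseteq> WW N"
proof
  fix x assume "x \<in> range f"
  then obtain j where x: "x = f j" by blast
  show "x \<in> WW N"
  proof (cases "j < N")
    case True
    have "(\<Sum>i<N. (if i = j then 1 else 0) *\<^sub>R f i) = (\<Sum>i<N. if i = j then f i else 0)"
      by (intro sum.cong) auto
    also have "\<dots> = f j" using True by simp
    finally have "x = (\<Sum>i<N. (if i = j then 1 else 0) *\<^sub>R f i) + 0" using x by simp
    moreover have "(0::'a) \<in> TT N" using subspace_0[OF TT_subspace] .
    ultimately show ?thesis unfolding WW_def
      by (intro CollectI exI[of _ "\<lambda>i. if i = j then 1 else 0"] exI[of _ 0] conjI)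
  next
    case False
    have "f j \<in> TT N" unfolding TT_def using False
      by (intro subsetD[OF closure_subset] span_base) auto
    moreover have "x = (\<Sum>i<N. (0::real) *\<^sub>R f i) + f j" using x by simp
    ultimately show ?thesis unfolding WW_def
      by (intro CollectI exI[of _ "\<lambda>i. 0::real"] exI[of _ "f j"] conjI)
  qed
qed

lemma E_sub_WW: "closure (span (range f)) \<subseteq> WW N"
  by (intro closure_minimal span_minimal range_WW WW_subspace WW_closed)

end



context qd begin

lemma findB:
  assumes XE: "X \<subseteq> closure (span (range f))" and sX: "subspace X"
    and inf: "infinite_dimensional X"
  shows "\<exists>y\<in>X. y \<noteq> 0 \<and> y \<in> TT N"
proof -
  obtain B where B: "B \<subseteq> X" "independent B" "X \<subseteq> span B"
    using maximal_independent_subset[of X] by blast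
  have "infinite B"
  proof
    assume "finite B"
    moreover have "span B = X" using span_minimal[OF B(1) sX] B(3) by blast
    ultimately show False using inf unfolding infinite_dimensional_def by blast
  qed
  then obtain B' where B': "finite B'" "card B' = Suc N" "B' \<subseteq> B"
    using infinite_arbitrarily_large by blast
  have indB': "independent B'" using independent_mono[OF B(2) B'(3)] .
  have B'X: "B' \<subseteq> X" using B'(3) B(1) by blast
  have "\<forall>b\<in>B'. \<exists>c t. b = (\<Sum>i<N. c i *\<^sub>R f i) + t \<and> t \<in> TT N"
    using B'X XE E_sub_WW[of N] unfolding WW_def by blast
  then obtain C tt where Ct: "\<And>b. b \<in> B' \<Longrightarrow> b = (\<Sum>i<N. C b i *\<^sub>R f i) + tt b \<and> tt b \<in> TT N"
    by metis
  define vv where "vv b = (\<Sum>i<N. C b i *\<^sub>R f i)" for b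
  have vvsp: "vv b \<in> span (f ` {..<N})" for b
    unfolding vv_def by (intro span_sum span_scale span_base) auto
  show ?thesis
  proof (cases "inj_on vv B'")
    case False
    then obtain b1 b2 where b: "b1 \<in> B'" "b2 \<in> B'" "b1 \<noteq> b2" "vv b1 = vv b2"
      unfolding inj_on_def by blast
    have e1: "b1 = vv b1 + tt b1" "b2 = vv b2 + tt b2" using Ct[OF b(1)] Ct[OF b(2)] unfolding vv_def by auto
    have "b1 - b2 = tt b1 - tt b2" by (metis e1 b(4) add_diff_cancel_left)
    hence "b1 - b2 \<in> TT N" using Ct[OF b(1)] Ct[OF b(2)] subspace_diff[OF TT_subspace] by simp
    moreover have "b1 - b2 \<in> X" using b B'X subspace_diff[OF sX] by blast
    ultimately show ?thesis using b(3) by (intro bexI[of _ "b1 - b2"]) auto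
  next
    case True
    have card: "card (vv ` B') = Suc N" using card_image[OF True] B'(2) by simp
    have "dependent (vv ` B')"
    proof (rule ccontr)
      assume "\<not> dependent (vv ` B')"
      hence ind: "independent (vv ` B')" by simp
      have "card (vv ` B') \<le> card (f ` {..<N})"
        using independent_span_bound[OF _ ind] vvsp by blast
      also have "\<dots> \<le> N" using card_image_le[of "{..<N}" f] by simp
      finally show False using card by simp
    qed
    then obtain u w where uw: "w \<in> vv ` B'" "u w \<noteq> 0" "(\<Sum>v\<in>vv ` B'. u v *\<^sub>R v) = 0"
      using dependent_finite[of "vv ` B'"] B'(1) by blast
    obtain b0 where b0: "b0 \<in> B'" "w = vv b0" using uw(1) by blast
    have s0: "(\<Sum>b\<in>B'. u (vv b) *\<^sub>R vv b) = 0"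
      using uw(3) sum.reindex[OF True, of "\<lambda>v. u v *\<^sub>R v"] by simp
    define y where "y = (\<Sum>b\<in>B'. u (vv b) *\<^sub>R b)"
    have "y = (\<Sum>b\<in>B'. u (vv b) *\<^sub>R (vv b + tt b))"
      unfolding y_def using Ct unfolding vv_def by (intro sum.cong) auto
    also have "\<dots> = (\<Sum>b\<in>B'. u (vv b) *\<^sub>R vv b) + (\<Sum>b\<in>B'. u (vv b) *\<^sub>R tt b)"
      by (simp add: scaleR_add_right sum.distrib)
    finally have "y = (\<Sum>b\<in>B'. u (vv b) *\<^sub>R tt b)" using s0 by simp
    hence yT: "y \<in> TT N"
      using Ct by (auto intro!: subspace_sum[OF TT_subspace] subspace_scale[OF TT_subspace])
    have yX: "y \<in> X" unfolding y_def
      using B'X by (auto intro!: subspace_sum[OF sX] subspace_scale[OF sX])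
    have "y \<noteq> 0"
    proof
      assume y0: "y = 0"
      have "dependent B'" unfolding dependent_finite[OF B'(1)]
      proof (intro exI[of _ "\<lambda>b. u (vv b)"] conjI bexI[of _ b0])
        show "u (vv b0) \<noteq> 0" using b0 uw(2) by simp
        show "b0 \<in> B'" by (rule b0(1))
        show "(\<Sum>v\<in>B'. u (vv v) *\<^sub>R v) = 0" using y0 unfolding y_def .
      qed
      thus False using indB' by blast
    qed
    thus ?thesis using yT yX by blast
  qed
qed

lemma approx:
  assumes XE: "X \<subseteq> closure (span (range f))" and sX: "subspace X"
    and inf: "infinite_dimensional X"
  shows "\<exists>y J a. y \<in> X \<and> norm y = 1 \<and> finite J \<and> J \<subseteq> {N..} \<and>
           norm (y - (\<Sum>i\<in>J. a i *\<^sub>R f i)) < 1 / (real N + 1)"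
proof -
  obtain y0 where y0: "y0 \<in> X" "y0 \<noteq> 0" "y0 \<in> TT N" using findB[OF assms] by blast
  define y where "y = (1 / norm y0) *\<^sub>R y0"
  have yX: "y \<in> X" unfolding y_def using y0 subspace_scale[OF sX] by blast
  have yT: "y \<in> TT N" unfolding y_def using y0 subspace_scale[OF TT_subspace] by blast
  have yn: "norm y = 1" unfolding y_def using y0 by simp
  have "1 / (real N + 1) > 0" by simp
  then obtain w where w: "w \<in> span (f ` {N..})" "dist y w < 1 / (real N + 1)"
    using closure_approachableD[of y "span (f ` {N..})"] yT unfolding TT_def by blast
  obtain J a where J: "finite J" "J \<subseteq> {N..}" "w = (\<Sum>i\<in>J. a i *\<^sub>R f i)"
    using span_image_repr[OF w(1) inj_f] by blast
  show ?thesis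
    using yX yn J w(2) by (intro exI[of _ y] exI[of _ J] exI[of _ a]) (auto simp: dist_norm)
qed

lemma main: "anti_dispersed (closure (span (range f)))"
  unfolding anti_dispersed_def
proof (intro conjI notI)
  show "subspace (closure (span (range f)))" by (intro subspace_closure_rv subspace_span)
  show "closed (closure (span (range f)))" by simp
next
  assume "\<exists>X. X \<subseteq> closure (span (range f)) \<and> subspace X \<and> closed X \<and> infinite_dimensional X \<and> dispersed X"
  then obtain X where XE: "X \<subseteq> closure (span (range f))" and sX: "subspace X"
    and inf: "infinite_dimensional X" and disp: "dispersed X" by blast
  have "\<forall>N. \<exists>y J a. y \<in> X \<and> norm y = 1 \<and> finite J \<and> J \<subseteq> {N..} \<and>
           norm (y - (\<Sum>i\<in>J. a i *\<^sub>R f i)) < 1 / (real N + 1)"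
    using approx[OF XE sX inf] by blast
  then obtain Y JJ AA where P: "\<And>N. Y N \<in> X \<and> norm (Y N) = 1 \<and> finite (JJ N) \<and> JJ N \<subseteq> {N..} \<and>
           norm (Y N - (\<Sum>i\<in>JJ N. AA N i *\<^sub>R f i)) < 1 / (real N + 1)"
    by metis
  define nn where "nn = rec_nat 0 (\<lambda>_ m. Suc (Max (insert m (JJ m))))"
  have nn0: "nn 0 = 0" and nnS: "\<And>n. nn (Suc n) = Suc (Max (insert (nn n) (JJ (nn n))))"
    unfolding nn_def by simp_all
  have fin: "\<And>n. finite (insert (nn n) (JJ (nn n)))" using P by simp
  have blk: "\<And>n i. i \<in> JJ (nn n) \<Longrightarrow> nn n \<le> i \<and> i < nn (Suc n)"
  proof -
    fix n i assume i: "i \<in> JJ (nn n)"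
    have "nn n \<le> i" using P[of "nn n"] i by auto
    moreover have "i \<le> Max (insert (nn n) (JJ (nn n)))" using fin[of n] i by simp
    ultimately show "nn n \<le> i \<and> i < nn (Suc n)" using nnS[of n] by simp
  qed
  have sm_nn: "strict_mono nn"
    unfolding strict_mono_Suc_iff using nnS fin by (simp add: le_imp_less_Suc)
  define x where "x n = Y (nn n)" for n
  define g where "g n = (\<Sum>i\<in>JJ (nn n). AA (nn n) i *\<^sub>R e i)" for n
  have rx: "range x \<subseteq> unit_sphere \<inter> X"
    using P unfolding x_def unit_sphere_def by auto
  have dg: "disjoint_seq g"
    unfolding disjoint_seq_def
  proof (intro allI impI)
    fix n m :: nat assume nm: "n \<noteq> m"
    have "JJ (nn n) \<inter> JJ (nn m) = {}"
    proof (rule ccontr)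
      assume "JJ (nn n) \<inter> JJ (nn m) \<noteq> {}"
      then obtain i where i: "i \<in> JJ (nn n)" "i \<in> JJ (nn m)" by blast
      show False
      proof (cases "n < m")
        case True
        hence "nn (Suc n) \<le> nn m" using sm_nn by (simp add: strict_mono_less_eq Suc_leI)
        thus False using blk[OF i(1)] blk[OF i(2)] by simp
      next
        case False
        hence "m < n" using nm by simp
        hence "nn (Suc m) \<le> nn n" using sm_nn by (simp add: strict_mono_less_eq Suc_leI)
        thus False using blk[OF i(1)] blk[OF i(2)] by simp
      qed
    qed
    thus "lat_disjoint (g n) (g m)" unfolding g_def
      using P by (intro disj_blocks[OF dj]) auto
  qed
  define h where "h N = 1 / (real N + 1) + (2 / (1 - \<delta>)) * (\<delta> - (\<Sum>i<N. d i))" for N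
  have pos: "0 < 1 - \<delta>" using \<delta>_lt by simp
  have bound: "norm (g n - x n) \<le> h (nn n)" for n
  proof -
    let ?N = "nn n" let ?J = "JJ (nn n)" let ?a = "AA (nn n)"
    define z where "z = (\<Sum>i\<in>?J. ?a i *\<^sub>R f i)"
    have yz: "norm (x n - z) < 1 / (real ?N + 1)" using P unfolding x_def z_def by blast
    have "1 / (real ?N + 1) \<le> 1" by simp
    hence "norm z \<le> 2" using yz P[of ?N] norm_triangle_ineq3[of z "x n"] unfolding x_def
      by (smt (verit) norm_minus_commute norm_triangle_sub)
    have ab: "\<bar>?a i\<bar> \<le> 2 / (1 - \<delta>)" if "i \<in> ?J" for i
    proof -
      have "\<bar>?a i\<bar> * (1 - \<delta>) \<le> norm z" unfolding z_def using P that by (intro coeffA) auto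
      thus ?thesis using \<open>norm z \<le> 2\<close> pos by (simp add: pos_le_divide_eq)
    qed
    have "norm (z - g n) \<le> (2 / (1 - \<delta>)) * sum d ?J"
      unfolding z_def g_def using P ab by (intro diff_bound) auto
    also have "\<dots> \<le> (2 / (1 - \<delta>)) * (\<delta> - (\<Sum>i<?N. d i))"
      using tail_le[of ?J ?N] P pos by (intro mult_left_mono) auto
    finally have zg: "norm (z - g n) \<le> (2 / (1 - \<delta>)) * (\<delta> - (\<Sum>i<?N. d i))" .
    have "g n - x n = (g n - z) + (z - x n)" by simp
    hence "norm (g n - x n) \<le> norm (g n - z) + norm (z - x n)" by (metis norm_triangle_ineq)
    hence "norm (g n - x n) \<le> norm (z - g n) + norm (x n - z)" by (simp add: norm_minus_commute)
    thus ?thesis using zg yz unfolding h_def by simp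
  qed
  have h0: "h \<longlonglongrightarrow> 0"
  proof -
    have 1: "(\<lambda>N. 1 / (real N + 1)) \<longlonglongrightarrow> 0"
      using LIMSEQ_inverse_real_of_nat by (simp add: inverse_eq_divide add.commute)
    have 2: "(\<lambda>N. \<delta> - (\<Sum>i<N. d i)) \<longlonglongrightarrow> \<delta> - \<delta>"
      unfolding \<delta>_def by (intro tendsto_diff tendsto_const summable_LIMSEQ smd)
    have "h \<longlonglongrightarrow> 0 + (2 / (1 - \<delta>)) * (\<delta> - \<delta>)"
      unfolding h_def[abs_def] by (intro tendsto_add 1 tendsto_mult tendsto_const 2)
    thus ?thesis by simp
  qed
  have hn: "(h \<circ> nn) \<longlonglongrightarrow> 0" by (rule LIMSEQ_subseq_LIMSEQ[OF h0 sm_nn])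
  have ev: "\<forall>\<^sub>F n in sequentially. norm (norm (g n - x n)) \<le> (h \<circ> nn) n"
    using bound by (intro always_eventually allI) simp
  have "(\<lambda>n. norm (g n - x n)) \<longlonglongrightarrow> 0" by (rule Lim_null_comparison[OF ev hn])
  hence "almost_disjoint_in X x"
    unfolding almost_disjoint_in_def using rx dg by blast
  thus False using disp unfolding dispersed_def by blast
qed

end


theorem proposition4p12:
  fixes f :: "nat \<Rightarrow> 'a::banach_lattice"
  assumes "quasi_disjoint f"
  shows "anti_dispersed (closure (span (range f)))"
proof -
  obtain e where f1: "range f \<subseteq> unit_sphere" and e1: "range e \<subseteq> unit_sphere"
    and dj: "disjoint_seq e" and sm: "summable (\<lambda>n. norm (f n - e n))"
    and lt: "(\<Sum>n. norm (f n - e n)) < 1"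
    using assms unfolding quasi_disjoint_def by blast
  interpret qd f e
    using f1 e1 dj sm lt by unfold_locales (auto simp: unit_sphere_def)
  show ?thesis by (rule main)
qed

end
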